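(* Let $\Gamma_1=(V_1,m_1,\tau_1)$ and $\Gamma_2=(V_2,m_2,\tau_2)$ be weak $W$-graphs such that $\mathbb{C}V_1$ and $\mathbb{C}V_2$ are isomorphic representations of $W$. Then $\Gamma_1$ and $\Gamma_2$ have the same $\tau$-invariant, i.e. $\{\tau_1(v):v\in V_1\}=\{\tau_2(v):v\in V_2\}$.
   Context: $W$ is a Weyl group with a fixed set $\Delta$ of simple roots; for a root $\alpha$, $s_\alpha$ is the reflection in the hyperplane orthogonal to $\alpha$. A weak $W$-graph is a triple $\Gamma=(V,m,\tau)$ where $V$ is a finite set, $m:V\times V\to\mathbb{C}$ is a map, and $\tau$ is a map from $V$ to the power set of $\Delta$, such that the linear maps $s_\alpha:\mathbb{C}V\to\mathbb{C}V$ ($\alpha\in\Delta$) given on basis vectors by $s_\alpha(v)=-v$ if $\alpha\in\tau(v)$ and $s_\alpha(v)=v-\sum_{u\in V,\ \alpha\in\tau(u)} m(u,v)u$ if $\alpha\notin\tau(v)$ define a representation of $W$ on $\mathbb{C}V$. The $\tau$-invariant of $\Gamma$ is the image of $\tau$, the set $\{\tau(v): v\in V\}$. *)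

theory Defs
  imports "HOL-Analysis.Analysis"
begin

definition refl :: "'a::euclidean_space \<Rightarrow> 'a \<Rightarrow> 'a" where
  "refl \<alpha> x = x - ((2 * (x \<bullet> \<alpha>)) / (\<alpha> \<bullet> \<alpha>)) *\<^sub>R \<alpha>"

definition root_system :: "'a::euclidean_space set \<Rightarrow> bool" where
  "root_system R \<longleftrightarrow> finite R \<and> 0 \<notin> R \<and> span R = UNIV
     \<and> (\<forall>\<alpha>\<in>R. \<forall>\<beta>\<in>R. refl \<alpha> \<beta> \<in> R)
     \<and> (\<forall>\<alpha>\<in>R. \<forall>\<beta>\<in>R. (2 * (\<beta> \<bullet> \<alpha>)) / (\<alpha> \<bullet> \<alpha>) \<in> \<int>)
     \<and> (\<forall>\<alpha>\<in>R. \<forall>c::real. c *\<^sub>R \<alpha> \<in> R \<longrightarrow> c = 1 \<or> c = -1)"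

definition simple_system :: "'a::euclidean_space set \<Rightarrow> 'a set \<Rightarrow> bool" where
  "simple_system R \<Delta> \<longleftrightarrow> \<Delta> \<subseteq> R \<and> independent \<Delta>
     \<and> (\<forall>\<beta>\<in>R. \<exists>c::'a \<Rightarrow> real. (\<forall>\<alpha>\<in>\<Delta>. c \<alpha> \<in> \<int>) \<and> \<beta> = (\<Sum>\<alpha>\<in>\<Delta>. c \<alpha> *\<^sub>R \<alpha>)
          \<and> ((\<forall>\<alpha>\<in>\<Delta>. c \<alpha> \<ge> 0) \<or> (\<forall>\<alpha>\<in>\<Delta>. c \<alpha> \<le> 0)))"

inductive_set weyl_group :: "'a::euclidean_space set \<Rightarrow> ('a \<Rightarrow> 'a) set" for R where
  id_in: "id \<in> weyl_group R"
| step: "w \<in> weyl_group R \<Longrightarrow> \<alpha> \<in> R \<Longrightarrow> refl \<alpha> \<circ> w \<in> weyl_group R"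

text \<open>\<open>\<complex>V\<close> is modelled as the space of functions \<open>V \<Rightarrow> complex\<close>, with \<open>V\<close> a finite type;
  a basis vector \<open>v\<close> is the indicator function of \<open>v\<close>.\<close>

definition clin :: "(('v \<Rightarrow> complex) \<Rightarrow> ('u \<Rightarrow> complex)) \<Rightarrow> bool" where
  "clin f \<longleftrightarrow> (\<forall>x y. f (\<lambda>u. x u + y u) = (\<lambda>u. f x u + f y u))
              \<and> (\<forall>c x. f (\<lambda>u. c * x u) = (\<lambda>u. c * f x u))"

definition is_rep :: "('a::euclidean_space \<Rightarrow> 'a) set \<Rightarrow>
    (('a \<Rightarrow> 'a) \<Rightarrow> ('v \<Rightarrow> complex) \<Rightarrow> ('v \<Rightarrow> complex)) \<Rightarrow> bool" where
  "is_rep W \<rho> \<longleftrightarrow> (\<forall>w\<in>W. clin (\<rho> w)) \<and> \<rho> id = id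
     \<and> (\<forall>w1\<in>W. \<forall>w2\<in>W. \<rho> (w1 \<circ> w2) = \<rho> w1 \<circ> \<rho> w2)"

definition rep_iso :: "('a::euclidean_space \<Rightarrow> 'a) set \<Rightarrow>
    (('a \<Rightarrow> 'a) \<Rightarrow> ('v \<Rightarrow> complex) \<Rightarrow> ('v \<Rightarrow> complex)) \<Rightarrow>
    (('a \<Rightarrow> 'a) \<Rightarrow> ('u \<Rightarrow> complex) \<Rightarrow> ('u \<Rightarrow> complex)) \<Rightarrow> bool" where
  "rep_iso W \<rho>1 \<rho>2 \<longleftrightarrow> (\<exists>T. clin T \<and> bij T \<and> (\<forall>w\<in>W. T \<circ> \<rho>1 w = \<rho>2 w \<circ> T))"

definition wg_basis_img :: "('v::finite \<Rightarrow> 'v \<Rightarrow> complex) \<Rightarrow> ('v \<Rightarrow> 'a set) \<Rightarrow> 'a \<Rightarrow> 'v \<Rightarrow> ('v \<Rightarrow> complex)" where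
  "wg_basis_img m \<tau> \<alpha> v =
     (if \<alpha> \<in> \<tau> v then (\<lambda>u. - (if u = v then 1 else 0))
      else (\<lambda>u. (if u = v then 1 else 0) - (if \<alpha> \<in> \<tau> u then m u v else 0)))"

definition wg_map :: "('v::finite \<Rightarrow> 'v \<Rightarrow> complex) \<Rightarrow> ('v \<Rightarrow> 'a set) \<Rightarrow> 'a \<Rightarrow> ('v \<Rightarrow> complex) \<Rightarrow> ('v \<Rightarrow> complex)" where
  "wg_map m \<tau> \<alpha> f = (\<lambda>u. \<Sum>v\<in>UNIV. f v * wg_basis_img m \<tau> \<alpha> v u)"

definition wgraph_rep :: "'a::euclidean_space set \<Rightarrow> 'a set \<Rightarrow> ('v::finite \<Rightarrow> 'v \<Rightarrow> complex) \<Rightarrow> ('v \<Rightarrow> 'a set)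
    \<Rightarrow> (('a \<Rightarrow> 'a) \<Rightarrow> ('v \<Rightarrow> complex) \<Rightarrow> ('v \<Rightarrow> complex)) \<Rightarrow> bool" where
  "wgraph_rep R \<Delta> m \<tau> \<rho> \<longleftrightarrow> is_rep (weyl_group R) \<rho> \<and> (\<forall>\<alpha>\<in>\<Delta>. \<rho> (refl \<alpha>) = wg_map m \<tau> \<alpha>)"

definition weak_W_graph :: "'a::euclidean_space set \<Rightarrow> 'a set \<Rightarrow> ('v::finite \<Rightarrow> 'v \<Rightarrow> complex) \<Rightarrow> ('v \<Rightarrow> 'a set) \<Rightarrow> bool" where
  "weak_W_graph R \<Delta> m \<tau> \<longleftrightarrow> (\<forall>v. \<tau> v \<subseteq> \<Delta>) \<and> (\<exists>\<rho>. wgraph_rep R \<Delta> m \<tau> \<rho>)"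

end

theory Submission
  imports Defs "HOL-Analysis.Cartesian_Space"
begin

lemma wg_map_plus:
  fixes m :: "'v::finite \<Rightarrow> 'v \<Rightarrow> complex"
  assumes "\<alpha> \<notin> \<tau> u"
  shows "wg_map m \<tau> \<alpha> x u = x u"
proof -
  have "wg_map m \<tau> \<alpha> x u = (\<Sum>v\<in>UNIV. if v = u then x u else 0)"
    unfolding wg_map_def
    by (rule sum.cong) (use assms in \<open>auto simp: wg_basis_img_def\<close>)
  then show ?thesis by simp
qed

lemma wg_map_minus:
  fixes m :: "'v::finite \<Rightarrow> 'v \<Rightarrow> complex"
  assumes "\<forall>v. \<alpha> \<notin> \<tau> v \<longrightarrow> x v = 0"
  shows "wg_map m \<tau> \<alpha> x = (\<lambda>u. - x u)"
proof
  fix u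
  show "wg_map m \<tau> \<alpha> x u = - x u"
  proof (cases "\<alpha> \<in> \<tau> u")
    case True
    have "wg_map m \<tau> \<alpha> x u = (\<Sum>v\<in>UNIV. if v = u then - x u else 0)"
      unfolding wg_map_def
      by (rule sum.cong) (use assms True in \<open>auto simp: wg_basis_img_def\<close>)
    then show ?thesis by simp
  next
    case False
    then show ?thesis using wg_map_plus[of \<alpha> \<tau> u m x] False assms by simp
  qed
qed

lemma eig_char:
  fixes m :: "'v::finite \<Rightarrow> 'v \<Rightarrow> complex"
  shows "(\<forall>\<alpha>\<in>J. wg_map m \<tau> \<alpha> x = (\<lambda>u. - x u)) \<longleftrightarrow> (\<forall>u. \<not> J \<subseteq> \<tau> u \<longrightarrow> x u = 0)"
proof
  assume H: "\<forall>\<alpha>\<in>J. wg_map m \<tau> \<alpha> x = (\<lambda>u. - x u)"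
  show "\<forall>u. \<not> J \<subseteq> \<tau> u \<longrightarrow> x u = 0"
  proof (intro allI impI)
    fix u assume "\<not> J \<subseteq> \<tau> u"
    then obtain \<alpha> where a: "\<alpha> \<in> J" "\<alpha> \<notin> \<tau> u" by blast
    have "x u = - x u" using wg_map_plus[of \<alpha> \<tau> u m x] a(2) H a(1) by (metis)
    then show "x u = 0" by simp
  qed
next
  assume H: "\<forall>u. \<not> J \<subseteq> \<tau> u \<longrightarrow> x u = 0"
  show "\<forall>\<alpha>\<in>J. wg_map m \<tau> \<alpha> x = (\<lambda>u. - x u)"
    using H by (intro ballI wg_map_minus) blast
qed

lemma card_eq_iso:
  fixes T :: "('v1::finite \<Rightarrow> complex) \<Rightarrow> ('v2::finite \<Rightarrow> complex)"
  assumes cl: "clin T" and inj: "inj T"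
    and img: "T ` {x. \<forall>u. \<not> P1 u \<longrightarrow> x u = 0} = {y. \<forall>u. \<not> P2 u \<longrightarrow> y u = 0}"
  shows "card {u. P1 u} = card {u. P2 u}"
proof -
  define T' :: "complex^'v1 \<Rightarrow> complex^'v2" where "T' = (\<lambda>x. vec_lambda (T (vec_nth x)))"
  define S1 :: "(complex^'v1) set" where "S1 = {x. \<forall>i. i \<notin> {u. P1 u} \<longrightarrow> x$i = 0}"
  define S2 :: "(complex^'v2) set" where "S2 = {x. \<forall>i. i \<notin> {u. P2 u} \<longrightarrow> x$i = 0}"
  have add: "T (\<lambda>u. x u + y u) = (\<lambda>u. T x u + T y u)" for x y
    using cl unfolding clin_def by blast
  have mul: "T (\<lambda>u. c * x u) = (\<lambda>u. c * T x u)" for c x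
    using cl unfolding clin_def by blast
  have nth_add: "vec_nth (x + y) = (\<lambda>u. x$u + y$u)" for x y :: "complex^'v1"
    by auto
  have nth_mul: "vec_nth (c *s x) = (\<lambda>u. c * x$u)" for c and x :: "complex^'v1"
    by auto
  have lin: "Vector_Spaces.linear (*s) (*s) T'"
    unfolding Vector_Spaces.linear_iff
  proof (intro conjI allI)
    show "vector_space ((*s) :: complex \<Rightarrow> complex^'v1 \<Rightarrow> _)" by (rule vec.vector_space_axioms)
    show "vector_space ((*s) :: complex \<Rightarrow> complex^'v2 \<Rightarrow> _)" by (rule vec.vector_space_axioms)
    show "T' (x + y) = T' x + T' y" for x y
      unfolding T'_def nth_add add by (simp add: vec_eq_iff)
    show "T' (c *s x) = c *s T' x" for c x
      unfolding T'_def nth_mul mul by (simp add: vec_eq_iff)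
  qed
  have injT': "inj T'"
  proof (rule injI)
    fix x y assume "T' x = T' y"
    then have "T (vec_nth x) = T (vec_nth y)" unfolding T'_def
      by (metis vec_lambda_inverse UNIV_I)
    then have "vec_nth x = vec_nth y" using inj by (simp add: inj_eq)
    then show "x = y" by (simp add: vec_nth_inject)
  qed
  have imgT': "T' ` S1 = S2"
  proof
    show "T' ` S1 \<subseteq> S2"
    proof
      fix z assume "z \<in> T' ` S1"
      then obtain x where x: "x \<in> S1" "z = T' x" by blast
      have "vec_nth x \<in> {x. \<forall>u. \<not> P1 u \<longrightarrow> x u = 0}" using x(1) unfolding S1_def by auto
      then have "T (vec_nth x) \<in> {y. \<forall>u. \<not> P2 u \<longrightarrow> y u = 0}" using img by blast
      then show "z \<in> S2" unfolding S2_def x(2) T'_def by auto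
    qed
  next
    show "S2 \<subseteq> T' ` S1"
    proof
      fix z assume "z \<in> S2"
      then have "vec_nth z \<in> {y. \<forall>u. \<not> P2 u \<longrightarrow> y u = 0}" unfolding S2_def by auto
      then have "vec_nth z \<in> T ` {x. \<forall>u. \<not> P1 u \<longrightarrow> x u = 0}" using img by simp
      then obtain f where f0: "f \<in> {x. \<forall>u. \<not> P1 u \<longrightarrow> x u = 0}" and f2: "vec_nth z = T f"
        by (rule imageE)
      have f: "\<forall>u. \<not> P1 u \<longrightarrow> f u = 0" "vec_nth z = T f" using f0 f2 by auto
      have "vec_lambda f \<in> S1" using f(1) unfolding S1_def by auto
      moreover have "z = T' (vec_lambda f)"
      proof -
        have e: "vec_nth (vec_lambda f) = f" by (rule ext) simp
        have "z = vec_lambda (vec_nth z)" by (rule vec_nth_inverse[symmetric])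
        then show ?thesis unfolding T'_def e f(2) .
      qed
      ultimately show "z \<in> T' ` S1" by blast
    qed
  qed
  have "vec.dim (T' ` S1) = vec.dim S1"
    by (rule vec.dim_image_eq[OF lin]) (use injT' in \<open>auto intro: inj_on_subset\<close>)
  then have "vec.dim S2 = vec.dim S1" using imgT' by simp
  then show ?thesis unfolding S1_def S2_def dim_substandard_cart by simp
qed

lemma sum_fib:
  fixes \<tau> :: "'v::finite \<Rightarrow> 'a set"
  assumes "finite D" "\<forall>v. \<tau> v \<subseteq> D"
  shows "card {v. J \<subseteq> \<tau> v} = (\<Sum>K\<in>{K. J \<subseteq> K \<and> K \<subseteq> D}. card {v. \<tau> v = K})"
proof -
  have fin: "finite {K. J \<subseteq> K \<and> K \<subseteq> D}"
    by (rule finite_subset[of _ "Pow D"]) (use assms in auto)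
  have eq: "{v. J \<subseteq> \<tau> v} = (\<Union>K\<in>{K. J \<subseteq> K \<and> K \<subseteq> D}. {v. \<tau> v = K})"
    using assms by auto
  show ?thesis unfolding eq
    by (rule card_UN_disjoint[OF fin]) auto
qed

lemma comb:
  fixes \<tau>1 :: "'v1::finite \<Rightarrow> 'a set" and \<tau>2 :: "'v2::finite \<Rightarrow> 'a set"
  assumes D: "finite D" and s1: "\<forall>v. \<tau>1 v \<subseteq> D" and s2: "\<forall>v. \<tau>2 v \<subseteq> D"
    and cnt: "\<And>J. J \<subseteq> D \<Longrightarrow> card {v. J \<subseteq> \<tau>1 v} = card {v. J \<subseteq> \<tau>2 v}"
  shows "J \<subseteq> D \<Longrightarrow> card {v. \<tau>1 v = J} = card {v. \<tau>2 v = J}"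
proof (induction "card D - card J" arbitrary: J rule: less_induct)
  case less
  define KK where "KK = {K. J \<subseteq> K \<and> K \<subseteq> D} - {J}"
  have fin: "finite {K. J \<subseteq> K \<and> K \<subseteq> D}"
    by (rule finite_subset[of _ "Pow D"]) (use D in auto)
  have ins: "{K. J \<subseteq> K \<and> K \<subseteq> D} = insert J KK" using less.prems unfolding KK_def by auto
  have finKK: "finite KK" using fin unfolding KK_def by simp
  have JK: "J \<notin> KK" unfolding KK_def by simp
  have IH: "card {v. \<tau>1 v = K} = card {v. \<tau>2 v = K}" if "K \<in> KK" for K
  proof -
    have K: "J \<subset> K" "K \<subseteq> D" using that unfolding KK_def by auto
    have "finite K" using K D finite_subset by blast
    then have "card J < card K" using K psubset_card_mono by blast
    moreover have "card K \<le> card D" using K D card_mono by blast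
    ultimately have "card D - card K < card D - card J" by linarith
    then show ?thesis using less.hyps K(2) by blast
  qed
  have e1: "card {v. J \<subseteq> \<tau>1 v} = card {v. \<tau>1 v = J} + (\<Sum>K\<in>KK. card {v. \<tau>1 v = K})"
    unfolding sum_fib[OF D s1] ins using finKK JK by simp
  have e2: "card {v. J \<subseteq> \<tau>2 v} = card {v. \<tau>2 v = J} + (\<Sum>K\<in>KK. card {v. \<tau>2 v = K})"
    unfolding sum_fib[OF D s2] ins using finKK JK by simp
  have "(\<Sum>K\<in>KK. card {v. \<tau>1 v = K}) = (\<Sum>K\<in>KK. card {v. \<tau>2 v = K})"
    using IH by (rule sum.cong[OF refl])
  then show ?case using e1 e2 cnt[OF less.prems] by linarith
qed

theorem corollary2p11:
  fixes R \<Delta> :: "'a::euclidean_space set"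
    and m1 :: "'v1::finite \<Rightarrow> 'v1 \<Rightarrow> complex" and \<tau>1 :: "'v1 \<Rightarrow> 'a set"
    and m2 :: "'v2::finite \<Rightarrow> 'v2 \<Rightarrow> complex" and \<tau>2 :: "'v2 \<Rightarrow> 'a set"
  assumes "root_system R" and "simple_system R \<Delta>"
    and "weak_W_graph R \<Delta> m1 \<tau>1" and "weak_W_graph R \<Delta> m2 \<tau>2"
    and "\<exists>\<rho>1 \<rho>2. wgraph_rep R \<Delta> m1 \<tau>1 \<rho>1 \<and> wgraph_rep R \<Delta> m2 \<tau>2 \<rho>2
                 \<and> rep_iso (weyl_group R) \<rho>1 \<rho>2"
  shows "range \<tau>1 = range \<tau>2"
proof -
  obtain \<rho>1 \<rho>2 where r1: "wgraph_rep R \<Delta> m1 \<tau>1 \<rho>1" and r2: "wgraph_rep R \<Delta> m2 \<tau>2 \<rho>2"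
    and iso: "rep_iso (weyl_group R) \<rho>1 \<rho>2" using assms(5) by blast
  obtain T where cl: "clin T" and bj: "bij T"
    and comm: "\<forall>w\<in>weyl_group R. T \<circ> \<rho>1 w = \<rho>2 w \<circ> T"
    using iso unfolding rep_iso_def by blast
  have DR: "\<Delta> \<subseteq> R" and ind: "independent \<Delta>" using assms(2) unfolding simple_system_def by auto
  have D: "finite \<Delta>" using ind independent_imp_finite by blast
  have s1: "\<forall>v. \<tau>1 v \<subseteq> \<Delta>" using assms(3) unfolding weak_W_graph_def by auto
  have s2: "\<forall>v. \<tau>2 v \<subseteq> \<Delta>" using assms(4) unfolding weak_W_graph_def by auto
  have \<rho>1a: "\<rho>1 (refl \<alpha>) = wg_map m1 \<tau>1 \<alpha>" if "\<alpha> \<in> \<Delta>" for \<alpha>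
    using r1 that unfolding wgraph_rep_def by blast
  have \<rho>2a: "\<rho>2 (refl \<alpha>) = wg_map m2 \<tau>2 \<alpha>" if "\<alpha> \<in> \<Delta>" for \<alpha>
    using r2 that unfolding wgraph_rep_def by blast
  have W: "refl \<alpha> \<in> weyl_group R" if "\<alpha> \<in> \<Delta>" for \<alpha>
    using weyl_group.step[OF weyl_group.id_in, of \<alpha> R] that DR by auto
  have C: "T (\<rho>1 (refl \<alpha>) x) = \<rho>2 (refl \<alpha>) (T x)" if "\<alpha> \<in> \<Delta>" for \<alpha> x
  proof -
    have "(T \<circ> \<rho>1 (refl \<alpha>)) x = (\<rho>2 (refl \<alpha>) \<circ> T) x" using comm W[OF that] by simp
    then show ?thesis by simp
  qed
  have neg: "T (\<lambda>u. - x u) = (\<lambda>u. - T x u)" for x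
  proof -
    have "T (\<lambda>u. (-1) * x u) = (\<lambda>u. (-1) * T x u)" using cl unfolding clin_def by blast
    then show ?thesis by simp
  qed
  have inj: "inj T" using bj bij_is_inj by blast
  have cnt: "card {v. J \<subseteq> \<tau>1 v} = card {v. J \<subseteq> \<tau>2 v}" if J: "J \<subseteq> \<Delta>" for J
  proof (rule card_eq_iso[OF cl inj])
    have A1: "{x. \<forall>u. \<not> J \<subseteq> \<tau>1 u \<longrightarrow> x u = 0} = {x. \<forall>\<alpha>\<in>J. \<rho>1 (refl \<alpha>) x = (\<lambda>u. - x u)}"
    proof -
      have "{x. \<forall>\<alpha>\<in>J. \<rho>1 (refl \<alpha>) x = (\<lambda>u. - x u)} = {x. \<forall>\<alpha>\<in>J. wg_map m1 \<tau>1 \<alpha> x = (\<lambda>u. - x u)}"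
        using \<rho>1a J by (intro Collect_cong ball_cong) auto
      then show ?thesis by (simp only: eig_char)
    qed
    have A2: "{x. \<forall>u. \<not> J \<subseteq> \<tau>2 u \<longrightarrow> x u = 0} = {x. \<forall>\<alpha>\<in>J. \<rho>2 (refl \<alpha>) x = (\<lambda>u. - x u)}"
    proof -
      have "{x. \<forall>\<alpha>\<in>J. \<rho>2 (refl \<alpha>) x = (\<lambda>u. - x u)} = {x. \<forall>\<alpha>\<in>J. wg_map m2 \<tau>2 \<alpha> x = (\<lambda>u. - x u)}"
        using \<rho>2a J by (intro Collect_cong ball_cong) auto
      then show ?thesis by (simp only: eig_char)
    qed
    show "T ` {x. \<forall>u. \<not> J \<subseteq> \<tau>1 u \<longrightarrow> x u = 0} = {y. \<forall>u. \<not> J \<subseteq> \<tau>2 u \<longrightarrow> y u = 0}"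
      unfolding A1 A2
    proof
      show "T ` {x. \<forall>\<alpha>\<in>J. \<rho>1 (refl \<alpha>) x = (\<lambda>u. - x u)} \<subseteq> {x. \<forall>\<alpha>\<in>J. \<rho>2 (refl \<alpha>) x = (\<lambda>u. - x u)}"
      proof
        fix y assume "y \<in> T ` {x. \<forall>\<alpha>\<in>J. \<rho>1 (refl \<alpha>) x = (\<lambda>u. - x u)}"
        then obtain x where x: "\<forall>\<alpha>\<in>J. \<rho>1 (refl \<alpha>) x = (\<lambda>u. - x u)" "y = T x" by blast
        have "\<rho>2 (refl \<alpha>) y = (\<lambda>u. - y u)" if a: "\<alpha> \<in> J" for \<alpha>
        proof -
          have "\<rho>2 (refl \<alpha>) y = T (\<rho>1 (refl \<alpha>) x)" using C[of \<alpha> x] a J x(2) by auto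
          also have "\<dots> = T (\<lambda>u. - x u)" using x(1) a by simp
          also have "\<dots> = (\<lambda>u. - y u)" using neg x(2) by simp
          finally show ?thesis .
        qed
        then show "y \<in> {x. \<forall>\<alpha>\<in>J. \<rho>2 (refl \<alpha>) x = (\<lambda>u. - x u)}" by blast
      qed
    next
      show "{x. \<forall>\<alpha>\<in>J. \<rho>2 (refl \<alpha>) x = (\<lambda>u. - x u)} \<subseteq> T ` {x. \<forall>\<alpha>\<in>J. \<rho>1 (refl \<alpha>) x = (\<lambda>u. - x u)}"
      proof
        fix y assume y: "y \<in> {x. \<forall>\<alpha>\<in>J. \<rho>2 (refl \<alpha>) x = (\<lambda>u. - x u)}"
        obtain x where x: "y = T x" using bj unfolding bij_def by (metis surjD)
        have "\<forall>\<alpha>\<in>J. \<rho>1 (refl \<alpha>) x = (\<lambda>u. - x u)"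
        proof
          fix \<alpha> assume a: "\<alpha> \<in> J"
          have "T (\<rho>1 (refl \<alpha>) x) = \<rho>2 (refl \<alpha>) y" using C[of \<alpha> x] a J x by auto
          also have "\<dots> = (\<lambda>u. - y u)" using y a by simp
          also have "\<dots> = T (\<lambda>u. - x u)" using neg x by simp
          finally have "T (\<rho>1 (refl \<alpha>) x) = T (\<lambda>u. - x u)" .
          then show "\<rho>1 (refl \<alpha>) x = (\<lambda>u. - x u)" using inj by (simp add: inj_eq)
        qed
        then show "y \<in> T ` {x. \<forall>\<alpha>\<in>J. \<rho>1 (refl \<alpha>) x = (\<lambda>u. - x u)}" using x by blast
      qed
    qed
  qed
  have N: "card {v. \<tau>1 v = J} = card {v. \<tau>2 v = J}" if "J \<subseteq> \<Delta>" for J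
    using comb[OF D s1 s2 cnt that] .
  show ?thesis
  proof (intro equalityI subsetI)
    fix K assume "K \<in> range \<tau>1"
    then obtain v where v: "\<tau>1 v = K" by blast
    have "card {v. \<tau>1 v = K} > 0" using v by (auto simp: card_gt_0_iff)
    moreover have "K \<subseteq> \<Delta>" using s1 v by blast
    ultimately have "card {v. \<tau>2 v = K} > 0" using N[of K] by simp
    then show "K \<in> range \<tau>2" by (auto simp: card_gt_0_iff)
  next
    fix K assume "K \<in> range \<tau>2"
    then obtain v where v: "\<tau>2 v = K" by blast
    have "card {v. \<tau>2 v = K} > 0" using v by (auto simp: card_gt_0_iff)
    moreover have "K \<subseteq> \<Delta>" using s2 v by blast
    ultimately have "card {v. \<tau>1 v = K} > 0" using N[of K] by simp
    then show "K \<in> range \<tau>1" by (auto simp: card_gt_0_iff)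
  qed
qed

end
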